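(* For $n\ge2$, the natural action of $\mathrm{O}(2n)$ on $\mathbb{F}_2^{2n}$ has exactly four orbits: $\{0\}$, $\{j\}$, $\mathbb{F}_2^{2n,+}\setminus\{0,j\}$, and $\mathbb{F}_2^{2n,-}$.
   Context: All arithmetic is over $\mathbb{F}_2$. $\mathrm{O}(2n)$ is the group of binary $2n\times 2n$ matrices $A$ with $A^TA=AA^T=I$. $j=(1,\dots,1)^T$; $\mathbb{F}_2^{2n,+}$ (resp. $\mathbb{F}_2^{2n,-}$) is the set of vectors of even (resp. odd) Hamming weight. *)

theory Defs
  imports "HOL-Analysis.Analysis" "HOL-Library.Z2"
begin

definition orth_group :: "(bit ^ 'i ^ 'i) set" where
  "orth_group = {A :: bit ^ 'i ^ 'i. transpose A ** A = mat 1 \<and> A ** transpose A = mat 1}"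

definition all_ones :: "bit ^ 'i" where
  "all_ones = (\<chi> i. 1)"

definition hweight :: "bit ^ 'i \<Rightarrow> nat" where
  "hweight x = card {i. x $ i \<noteq> 0}"

definition even_vecs :: "(bit ^ 'i) set" where
  "even_vecs = {x. even (hweight x)}"

definition odd_vecs :: "(bit ^ 'i) set" where
  "odd_vecs = {x. odd (hweight x)}"

definition orth_orbit :: "bit ^ 'i \<Rightarrow> (bit ^ 'i) set" where
  "orth_orbit x = {A *v x | A. A \<in> (orth_group :: (bit ^ 'i ^ 'i) set)}"

end

theory Submission
  imports Defs
begin

declare add_bit_eq_xor[simp del] mult_bit_eq_and[simp del]

definition dotb :: "bit ^ 'i \<Rightarrow> bit ^ 'i \<Rightarrow> bit" where
  "dotb x y = (\<Sum>i\<in>UNIV. x$i * y$i)"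

definition tv :: "bit ^ 'i \<Rightarrow> bit ^ 'i ^ 'i" where
  "tv v = (\<chi> i k. (if i = k then 1 else 0) + v$i * v$k)"

lemma bit_add_self [simp]: "(a::bit) + a = 0"
  by (cases a) (simp_all flip: one_add_one)

lemma bit_add_self2 [simp]: "(a::bit) + (a + b) = b"
  by (metis add.assoc add_0 bit_add_self)

lemma bit_mult_self [simp]: "(a::bit) * a = a"
  by (cases a) simp_all

lemma vec_add_self [simp]: "(x::bit^'i) + x = 0"
  by (simp add: vec_eq_iff)

lemma vec_add_self2 [simp]: "(x::bit^'i) + (x + y) = y"
  by (simp add: vec_eq_iff)

lemma of_nat_bit: "(of_nat m :: bit) = 0 \<longleftrightarrow> even m"
  by (induction m) (auto simp: add.commute[of 1])

lemma dot_comm: "dotb x y = dotb y x"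
  by (simp add: dotb_def mult.commute)

lemma dot_add_right: "dotb x (y + z) = dotb x y + dotb x z"
  by (simp add: dotb_def distrib_left sum.distrib)

lemma dot_add_left: "dotb (y + z) x = dotb y x + dotb z x"
  by (simp add: dotb_def distrib_right sum.distrib)

lemma dot_self: "dotb x x = of_nat (hweight x)"
proof -
  have "dotb x x = (\<Sum>i\<in>UNIV. of_bool (x$i \<noteq> 0))"
    unfolding dotb_def by (intro sum.cong) auto
  also have "\<dots> = of_nat (hweight x)" by (simp add: hweight_def)
  finally show ?thesis .
qed

lemma even_iff_dot: "even (hweight x) \<longleftrightarrow> dotb x x = 0"
  by (simp add: dot_self of_nat_bit)

lemma dot_mv: "dotb (A *v x) y = dotb x (transpose A *v y)"
proof -
  have "dotb (A *v x) y = (\<Sum>i\<in>UNIV. \<Sum>j\<in>UNIV. A$i$j * x$j * y$i)"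
    unfolding dotb_def matrix_vector_mult_def by (simp add: sum_distrib_right)
  also have "\<dots> = (\<Sum>j\<in>UNIV. \<Sum>i\<in>UNIV. A$i$j * x$j * y$i)"
    by (rule sum.swap)
  also have "\<dots> = dotb x (transpose A *v y)"
    unfolding dotb_def matrix_vector_mult_def transpose_def
    by (simp add: sum_distrib_left mult.commute mult.left_commute)
  finally show ?thesis .
qed

lemma orth_preserves: "A \<in> orth_group \<Longrightarrow> dotb (A *v x) (A *v y) = dotb x y"
  by (simp add: dot_mv matrix_vector_mul_assoc orth_group_def del: transpose_matrix_vector)

lemma orth_back: "A \<in> orth_group \<Longrightarrow> transpose A *v (A *v x) = x"
  by (simp add: matrix_vector_mul_assoc orth_group_def del: transpose_matrix_vector)

lemma orth_ones: assumes "A \<in> orth_group" shows "A *v all_ones = all_ones"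
proof -
  have "(A ** transpose A) $ i $ i = 1" for i using assms by (simp add: orth_group_def mat_def)
  then show ?thesis
    by (simp add: vec_eq_iff all_ones_def matrix_vector_mult_def matrix_matrix_mult_def transpose_def)
qed

lemma orth_id: "mat 1 \<in> orth_group"
  by (simp add: orth_group_def)

lemma orth_mult: "A \<in> orth_group \<Longrightarrow> B \<in> orth_group \<Longrightarrow> B ** A \<in> orth_group"
proof -
  assume a: "A \<in> orth_group" and b: "B \<in> orth_group"
  have "transpose (B ** A) ** (B ** A) = transpose A ** (transpose B ** B) ** A"
    by (simp add: matrix_transpose_mul matrix_mul_assoc)
  also have "\<dots> = mat 1" using a b by (simp add: orth_group_def)
  finally have 1: "transpose (B ** A) ** (B ** A) = mat 1" .
  have "(B ** A) ** transpose (B ** A) = B ** (A ** transpose A) ** transpose B"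
    by (simp add: matrix_transpose_mul matrix_mul_assoc)
  also have "\<dots> = mat 1" using a b by (simp add: orth_group_def)
  finally show ?thesis using 1 by (simp add: orth_group_def)
qed

lemma tv_apply: "tv v *v x = x + dotb x v *s v"
proof -
  have "(tv v *v x) $ i = (x + dotb x v *s v) $ i" for i
  proof -
    have "(tv v *v x) $ i = (\<Sum>k\<in>UNIV. (if i = k then x$k else 0) + v$i * (x$k * v$k))"
      unfolding tv_def matrix_vector_mult_def vec_lambda_beta by (intro sum.cong) (auto simp: algebra_simps)
    also have "\<dots> = x$i + v$i * dotb x v"
      by (simp add: sum.distrib sum_distrib_left dotb_def)
    finally show ?thesis by (simp add: mult.commute)
  qed
  then show ?thesis by (simp add: vec_eq_iff)
qed

lemma tv_orth: assumes "dotb v v = 0" shows "tv v \<in> orth_group"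
proof -
  have t: "transpose (tv v) = tv v" by (simp add: vec_eq_iff tv_def transpose_def mult.commute)
  have "(tv v ** tv v) $ i $ k = mat 1 $ i $ k" for i k
  proof -
    have "(tv v ** tv v) $ i $ k = (tv v *v column k (tv v)) $ i"
      by (simp add: matrix_matrix_mult_def matrix_vector_mult_def column_def)
    also have "\<dots> = (column k (tv v) + dotb (column k (tv v)) v *s v) $ i" by (simp only: tv_apply)
    also have "dotb (column k (tv v)) v = v$k + v$k * dotb v v"
    proof -
      have "dotb (column k (tv v)) v = (\<Sum>j\<in>UNIV. (if j = k then v$j else 0) + v$k * (v$j * v$j))"
        unfolding dotb_def column_def tv_def vec_lambda_beta
        by (intro sum.cong) (auto simp: algebra_simps)
      also have "\<dots> = v$k + v$k * dotb v v"
        by (simp add: sum.distrib sum_distrib_left dotb_def)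
      finally show ?thesis .
    qed
    also have "(column k (tv v) + (v$k + v$k * dotb v v) *s v) $ i = mat 1 $ i $ k"
      using assms by (simp add: column_def tv_def mat_def mult.commute)
    finally show ?thesis .
  qed
  then have "tv v ** tv v = mat 1" by (simp add: vec_eq_iff)
  then show ?thesis by (simp add: orth_group_def t)
qed

lemma orth_transpose: "A \<in> orth_group \<Longrightarrow> transpose A \<in> orth_group"
  by (simp add: orth_group_def)

lemma dot_axis: "dotb w (axis a 1) = w$a"
proof -
  have "dotb w (axis a 1) = (\<Sum>i\<in>UNIV. if i = a then w$a else 0)"
    unfolding dotb_def axis_def vec_lambda_beta by (intro sum.cong) auto
  also have "\<dots> = w$a" by simp
  finally show ?thesis .
qed

lemma bit_cancel4: "(a::bit) + b + (b + c) = a + c"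
  by (cases a; cases b; cases c) (simp_all flip: one_add_one)

lemma reach1:
  assumes "dotb x x = dotb y y" "dotb x (x + y) = 1"
  shows "\<exists>A\<in>orth_group. A *v x = y"
proof -
  have "dotb (x+y) (x+y) = dotb x x + dotb x y + (dotb y x + dotb y y)"
    by (simp add: dot_add_left dot_add_right)
  also have "\<dots> = dotb x x + dotb y y" by (simp add: dot_comm[of y x] bit_cancel4)
  also have "\<dots> = 0" using assms by simp
  finally have "tv (x+y) \<in> orth_group" by (rule tv_orth)
  moreover have "tv (x+y) *v x = y" using assms(2) by (simp add: tv_apply dot_comm)
  ultimately show ?thesis by blast
qed

lemma reach:
  assumes "x \<noteq> 0" "x \<noteq> all_ones" "y \<noteq> 0" "y \<noteq> all_ones" "dotb x x = dotb y y"
  shows "\<exists>A\<in>orth_group. A *v x = y"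
proof (cases "dotb x (x + y) = 1")
  case True then show ?thesis using reach1 assms by blast
next
  case False
  then have xy: "dotb x x + dotb x y = 0" by (simp add: dot_add_right)
  obtain a0 where a0: "x$a0 = 1" using assms(1) by (auto simp: vec_eq_iff)
  obtain b0 where b0: "x$b0 = 0" using assms(2) by (auto simp: vec_eq_iff all_ones_def)
  have "\<exists>a b. x$a = 1 \<and> x$b = 0 \<and> y$a \<noteq> y$b"
  proof (rule ccontr)
    assume "\<not> ?thesis"
    then have h: "\<And>a b. x$a = 1 \<Longrightarrow> x$b = 0 \<Longrightarrow> y$a = y$b" by blast
    have "y$i = y$a0" for i
      using h[OF a0, of i] h[OF _ b0, of i] h[OF a0 b0] by (cases "x$i") auto
    then show False using assms(3,4)
      by (cases "y$a0") (auto simp: vec_eq_iff all_ones_def)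
  qed
  then obtain a b where ab: "x$a = 1" "x$b = 0" "y$a \<noteq> y$b" by blast
  have anb: "a \<noteq> b" using ab by auto
  define u where "u = axis a (1::bit) + axis b 1"
  have uu: "dotb u u = 0" using anb
  proof -
    have "dotb u u = u$a + u$b" unfolding u_def by (simp only: dot_add_right dot_axis)
    then show ?thesis using anb by (simp add: u_def axis_def flip: one_add_one)
  qed
  have xu: "dotb x u = 1" using ab by (simp add: u_def dot_add_right dot_axis)
  have yu: "dotb y u = 1" using ab(3) by (cases "y$a"; cases "y$b") (simp_all add: u_def dot_add_right dot_axis flip: one_add_one)
  define z where "z = x + u"
  have zz: "dotb z z = dotb x x"
  proof -
    have "dotb z z = dotb x x + dotb x u + (dotb u x + dotb u u)"
      unfolding z_def by (simp only: dot_add_left dot_add_right ac_simps)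
    then show ?thesis by (simp add: uu dot_comm[of u x] bit_cancel4)
  qed
  have s1: "\<exists>A\<in>orth_group. A *v x = z"
  proof (rule reach1)
    show "dotb x x = dotb z z" using zz by simp
    show "dotb x (x + z) = 1" by (simp add: z_def xu)
  qed
  have zy: "dotb z y = dotb x y + dotb u y" unfolding z_def by (rule dot_add_left)
  have "dotb z (z + y) = dotb x x + dotb x y + dotb u y"
    by (simp only: dot_add_right zz zy add.assoc)
  also have "\<dots> = 1" using xy yu by (simp add: dot_comm[of u y])
  finally have s2: "\<exists>A\<in>orth_group. A *v z = y"
    by (intro reach1) (simp_all add: zz assms(5))
  from s1 s2 obtain A B where "A \<in> orth_group" "B \<in> orth_group" "A *v x = z" "B *v z = y" by blast
  then show ?thesis by (intro bexI[of _ "B ** A"]) (auto simp: orth_mult simp flip: matrix_vector_mul_assoc)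
qed

lemma even_vecs_dot: "even_vecs = {x. dotb x x = 0}"
  by (simp add: even_vecs_def even_iff_dot)

lemma odd_vecs_dot: "odd_vecs = {x. dotb x x = 1}"
  by (auto simp: odd_vecs_def even_iff_dot)

lemma orbit_mem: "y \<in> orth_orbit x \<longleftrightarrow> (\<exists>A\<in>orth_group. A *v x = y)"
  by (auto simp: orth_orbit_def)

lemma ones_dot:
  assumes "even CARD('i::finite)"
  shows "dotb (all_ones :: bit^'i) all_ones = 0"
proof -
  have "hweight (all_ones :: bit^'i) = CARD('i)" by (simp add: hweight_def all_ones_def)
  then show ?thesis using assms by (simp add: dot_self of_nat_bit)
qed

lemma dot_zero [simp]: "dotb 0 x = 0"
  by (simp add: dotb_def)

lemma ones_ne0: "(all_ones :: bit^'i) \<noteq> 0"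
  by (auto simp: vec_eq_iff all_ones_def)

definition cls :: "bit^'i \<Rightarrow> (bit^'i) set" where
  "cls x = (if x = 0 then {0} else if x = all_ones then {all_ones}
            else if dotb x x = 0 then even_vecs - {0, all_ones} else odd_vecs)"

lemma orbit_eq:
  assumes "even CARD('i::finite)"
  shows "orth_orbit (x :: bit^'i) = cls x"
proof (intro set_eqI iffI)
  fix y assume "y \<in> orth_orbit x"
  then obtain A where A: "A \<in> orth_group" "A *v x = y" by (auto simp: orbit_mem)
  have bk: "transpose A *v y = x" using orth_back[OF A(1), of x] unfolding A(2) .
  have At: "transpose A \<in> orth_group" using A(1) by (rule orth_transpose)
  have dd: "dotb y y = dotb x x" using orth_preserves[OF A(1), of x x] unfolding A(2) .
  show "y \<in> cls x"
  proof (cases "x = 0")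
    case True then show ?thesis using A by (simp add: cls_def)
  next
    case x0: False
    show ?thesis
    proof (cases "x = all_ones")
      case True then show ?thesis using A orth_ones[OF A(1)] by (simp add: cls_def)
    next
      case x1: False
      have "y \<noteq> 0" using bk x0 by (auto simp del: transpose_matrix_vector)
      moreover have "y \<noteq> all_ones" using bk x1 orth_ones[OF At] by (auto simp del: transpose_matrix_vector)
      ultimately show ?thesis using x0 x1 dd
        by (auto simp: cls_def even_vecs_dot odd_vecs_dot)
    qed
  qed
next
  fix y assume y: "y \<in> cls x"
  have j: "dotb (all_ones :: bit^'i) all_ones = 0" using assms by (rule ones_dot)
  show "y \<in> orth_orbit x"
  proof (cases "x = 0 \<or> x = all_ones")
    case True
    then have "y = x" using y ones_ne0[where 'i='i] unfolding cls_def by (cases "x = 0") auto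
    then show ?thesis using orth_id by (auto simp: orbit_mem intro!: bexI[of _ "mat 1"])
  next
    case False
    then have "y \<noteq> 0 \<and> y \<noteq> all_ones \<and> dotb x x = dotb y y"
      using y j by (cases "dotb x x") (auto simp: cls_def even_vecs_dot odd_vecs_dot)
    then show ?thesis using False reach[of x y] by (auto simp: orbit_mem)
  qed
qed

theorem mainTheorem14:
  fixes n :: nat
  assumes "CARD('i::finite) = 2 * n" and "n \<ge> 2"
  shows "range (orth_orbit :: bit ^ 'i \<Rightarrow> (bit ^ 'i) set)
           = {{0}, {all_ones}, even_vecs - {0, all_ones}, odd_vecs}
       \<and> card (range (orth_orbit :: bit ^ 'i \<Rightarrow> (bit ^ 'i) set)) = 4"
proof -
  have ev: "even CARD('i)" using assms(1) by simp
  have c4: "CARD('i) \<ge> 4" using assms by simp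
  have j: "dotb (all_ones :: bit^'i) all_ones = 0" using ev by (rule ones_dot)
  have R: "range (orth_orbit :: bit ^ 'i \<Rightarrow> (bit ^ 'i) set) = range cls"
    using orbit_eq[OF ev] by auto
  obtain a :: 'i where True by simp
  have "\<not> (UNIV :: 'i set) \<subseteq> {a}"
  proof
    assume "(UNIV :: 'i set) \<subseteq> {a}"
    then have "CARD('i) \<le> card {a}" by (intro card_mono) auto
    then show False using c4 by simp
  qed
  then obtain b :: 'i where ab: "b \<noteq> a" by blast
  have "\<not> (UNIV :: 'i set) \<subseteq> {a, b}"
  proof
    assume "(UNIV :: 'i set) \<subseteq> {a, b}"
    then have "CARD('i) \<le> card {a, b}" by (intro card_mono) auto
    also have "\<dots> \<le> 2" by (simp add: card_insert_if)
    finally show False using c4 by simp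
  qed
  then obtain c :: 'i where c: "c \<noteq> a" "c \<noteq> b" by blast
  define e :: "bit^'i" where "e = axis a 1 + axis b 1"
  define w :: "bit^'i" where "w = axis a 1"
  have e0: "e \<noteq> 0" using ab by (auto simp: e_def vec_eq_iff axis_def intro!: exI[of _ a])
  have e1: "e \<noteq> all_ones" using c by (auto simp: e_def vec_eq_iff axis_def all_ones_def intro!: exI[of _ c])
  have ee: "dotb e e = 0"
  proof -
    have "dotb e e = e$a + e$b" unfolding e_def by (simp only: dot_add_right dot_axis)
    then show ?thesis using ab by (simp add: e_def axis_def flip: one_add_one)
  qed
  have w0: "w \<noteq> 0" by (auto simp: w_def vec_eq_iff axis_def intro!: exI[of _ a])
  have w1: "w \<noteq> all_ones" using ab by (auto simp: w_def vec_eq_iff axis_def all_ones_def intro!: exI[of _ b])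
  have ww: "dotb w w = 1" by (simp add: w_def dot_axis)
  have j0: "(all_ones :: bit^'i) \<noteq> 0" by (auto simp: vec_eq_iff all_ones_def)
  have S: "range cls = {{0}, {all_ones}, even_vecs - {0, all_ones}, (odd_vecs :: (bit^'i) set)}"
  proof
    show "range cls \<subseteq> {{0}, {all_ones}, even_vecs - {0, all_ones}, (odd_vecs :: (bit^'i) set)}"
      by (auto simp: cls_def)
    have "cls 0 = {0}" "cls all_ones = {all_ones}" "cls e = even_vecs - {0, all_ones}" "cls w = odd_vecs"
      using e0 e1 ee w0 w1 ww j0 by (auto simp: cls_def)
    then show "{{0}, {all_ones}, even_vecs - {0, all_ones}, (odd_vecs :: (bit^'i) set)} \<subseteq> range cls"
      by (metis (no_types, lifting) empty_subsetI insert_subset rangeI)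
  qed
  have m: "e \<in> even_vecs" "w \<in> odd_vecs" "(0::bit^'i) \<in> even_vecs" "(all_ones::bit^'i) \<in> even_vecs"
    using ee ww j by (auto simp: even_vecs_dot odd_vecs_dot dotb_def)
  have o: "(0::bit^'i) \<notin> odd_vecs" "(all_ones::bit^'i) \<notin> odd_vecs" "e \<notin> odd_vecs"
    using ee j by (auto simp: odd_vecs_dot dotb_def)
  have d: "{0} \<noteq> {all_ones :: bit^'i}" "{0} \<noteq> even_vecs - {0, all_ones :: bit^'i}"
    "{0::bit^'i} \<noteq> odd_vecs" "{all_ones :: bit^'i} \<noteq> even_vecs - {0, all_ones}"
    "{all_ones::bit^'i} \<noteq> odd_vecs" "even_vecs - {0, all_ones::bit^'i} \<noteq> odd_vecs"
  proof -
    show "{0} \<noteq> {all_ones :: bit^'i}" using j0 by simp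
    show "{0} \<noteq> even_vecs - {0, all_ones :: bit^'i}" using m e0 e1 by blast
    show "{0::bit^'i} \<noteq> odd_vecs" using o by blast
    show "{all_ones :: bit^'i} \<noteq> even_vecs - {0, all_ones}" using m e0 e1 by blast
    show "{all_ones::bit^'i} \<noteq> odd_vecs" using o by blast
    show "even_vecs - {0, all_ones::bit^'i} \<noteq> odd_vecs" using m o e0 e1 by blast
  qed
  show ?thesis using R S d by (simp add: card_insert_if)
qed
end
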